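(* Let $G$ be a finite simple graph with $V(G)=\{v_1,\dots,v_n\}$, where vertex $v_i$ carries positive integer weight $t_i$. Let $G(v_1,\dots,v_n)$ be the unweighted graph obtained by replacing each $v_i$ by an independent set $I_i$ of $t_i$ new vertices, where a vertex of $I_i$ is adjacent to a vertex of $I_j$ ($i\neq j$) if and only if $v_iv_j\in E(G)$, and no two vertices of the same $I_i$ are adjacent. Then weighted Grim played on $G$ and ordinary Grim played on $G(v_1,\dots,v_n)$ have the same outcome: one is an $\mathcal{N}$ position if and only if the other is.
   Context: Grim is a two-player game on a finite simple undirected graph. Any isolated vertices of the starting graph are deleted before play begins. Players alternate moves; in ordinary (unweighted) Grim a move consists of selecting a vertex of the current graph and deleting it together with all its incident edges, after which every vertex that has become isolated is also deleted. The player who makes the last legal move wins (a player facing the empty graph has no move and loses). In weighted Grim each vertex carries a positive integer weight; a vertex of weight $t$ is deleted only once it has been selected $t$ times (each selection is a move and lowers its remaining weight by one, the selection that brings it to zero deleting it with its incident edges), or when it becomes isolated, in which case it is deleted. A position is an $\mathcal{N}$ position if the player about to move has a winning strategy, and a $\mathcal{P}$ position otherwise. *)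

theory Defs
  imports Main
begin

text \<open>For games without
  infinite plays (as Grim) this least fixed point is the usual N/P classification.\<close>

inductive N_pos :: "('s \<Rightarrow> 's \<Rightarrow> bool) \<Rightarrow> 's \<Rightarrow> bool" for mv :: "'s \<Rightarrow> 's \<Rightarrow> bool" where
  "mv s s' \<Longrightarrow> (\<forall>s''. mv s' s'' \<longrightarrow> N_pos mv s'') \<Longrightarrow> N_pos mv s"

text \<open>Simple graphs: a vertex set and a symmetric irreflexive edge relation.
  A current position is the set S of remaining vertices (induced subgraph).
  strip deletes the vertices of S isolated in the subgraph induced by S.\<close>

definition strip :: "('a \<Rightarrow> 'a \<Rightarrow> bool) \<Rightarrow> 'a set \<Rightarrow> 'a set" where
  "strip E S = {x \<in> S. \<exists>y\<in>S. E x y}"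

definition grim_move :: "('a \<Rightarrow> 'a \<Rightarrow> bool) \<Rightarrow> 'a set \<Rightarrow> 'a set \<Rightarrow> bool" where
  "grim_move E S S' \<longleftrightarrow> (\<exists>v\<in>S. S' = strip E (S - {v}))"

definition wgrim_move ::
  "('a \<Rightarrow> 'a \<Rightarrow> bool) \<Rightarrow> ('a set \<times> ('a \<Rightarrow> nat)) \<Rightarrow> ('a set \<times> ('a \<Rightarrow> nat)) \<Rightarrow> bool" where
  "wgrim_move E p p' \<longleftrightarrow>
     (\<exists>v\<in>fst p.
        (1 < snd p v \<and> p' = (fst p, (snd p)(v := snd p v - 1))) \<or>
        (snd p v = 1 \<and> p' = (strip E (fst p - {v}), snd p)))"

definition blowV :: "'a set \<Rightarrow> ('a \<Rightarrow> nat) \<Rightarrow> ('a \<times> nat) set" where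
  "blowV V t = {(v, k). v \<in> V \<and> k < t v}"

definition blowE :: "('a \<Rightarrow> 'a \<Rightarrow> bool) \<Rightarrow> ('a \<times> nat) \<Rightarrow> ('a \<times> nat) \<Rightarrow> bool" where
  "blowE E x y \<longleftrightarrow> fst x \<noteq> fst y \<and> E (fst x) (fst y)"

end

theory Submission
  imports Defs
begin

lemma N_pos_bisim:
  assumes fwd: "\<And>a b a'. R a b \<Longrightarrow> m1 a a' \<Longrightarrow> \<exists>b'. m2 b b' \<and> R a' b'"
    and bwd: "\<And>a b b'. R a b \<Longrightarrow> m2 b b' \<Longrightarrow> \<exists>a'. m1 a a' \<and> R a' b'"
  shows "N_pos m1 a \<Longrightarrow> R a b \<Longrightarrow> N_pos m2 b"
proof (induction arbitrary: b rule: N_pos.induct)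
  case (1 s s')
  from fwd[OF 1(3) 1(1)] obtain b' where b': "m2 b b'" "R s' b'" by blast
  show ?case
  proof (rule N_pos.intros[where mv=m2, OF b'(1)], intro allI impI)
    fix b'' assume "m2 b' b''"
    from bwd[OF b'(2) this] obtain a'' where "m1 s' a''" "R a'' b''" by blast
    with 1(2) show "N_pos m2 b''" by blast
  qed
qed

lemma strip_idem:
  assumes "\<And>x y. E x y \<Longrightarrow> E y x"
  shows "strip E (strip E S) = strip E S"
  using assms unfolding strip_def by blast

lemma strip_blow:
  fixes E :: "'a \<Rightarrow> 'a \<Rightarrow> bool"
  assumes "\<And>x. \<not> E x x"
  shows "strip (blowE E) T = {y\<in>T. fst y \<in> strip E (fst ` T)}"
  using assms unfolding strip_def blowE_def by (auto; metis fst_conv)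

definition Rel :: "('a\<Rightarrow>'a\<Rightarrow>bool) \<Rightarrow> ('a set \<times> ('a\<Rightarrow>nat)) \<Rightarrow> ('a\<times>nat) set \<Rightarrow> bool" where
  "Rel E p T \<longleftrightarrow> finite T \<and> fst p = fst ` T \<and> strip E (fst p) = fst p \<and>
     (\<forall>v\<in>fst p. snd p v = card {k. (v,k)\<in>T})"

lemma finC: "finite T \<Longrightarrow> finite {k. (v,k)\<in>T}"
  by (rule finite_subset[of _ "snd ` T"]) force+

lemma step_a:
  fixes E :: "'a \<Rightarrow> 'a \<Rightarrow> bool"
  assumes irr: "\<And>x. \<not> E x x"
    and R: "Rel E (S,w) T" and x: "(v,k) \<in> T" and c: "1 < card {k. (v,k)\<in>T}"
  shows "Rel E (S, w(v := w v - 1)) (strip (blowE E) (T - {(v,k)}))"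
proof -
  have fin: "finite T" and S: "S = fst ` T" and sS: "strip E S = S"
    and W: "\<forall>u\<in>S. w u = card {k. (u,k)\<in>T}" using R unfolding Rel_def by auto
  have "{k. (v,k)\<in>T} - {k} \<noteq> {}"
  proof
    assume "{k. (v,k)\<in>T} - {k} = {}"
    hence "{k. (v,k)\<in>T} \<subseteq> {k}" by blast
    hence "card {k. (v,k)\<in>T} \<le> 1" by (metis card.empty card.insert card_mono empty_iff finite.emptyI finite.insertI insert_absorb le0 One_nat_def)
    with c show False by simp
  qed
  then obtain k' where k': "(v,k') \<in> T" "k' \<noteq> k" by blast
  have fst': "fst ` (T - {(v,k)}) = S" unfolding S
  proof
    show "fst ` T \<subseteq> fst ` (T - {(v, k)})"
    proof
      fix u assume "u \<in> fst ` T"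
      then obtain y where y: "y \<in> T" "u = fst y" by blast
      show "u \<in> fst ` (T - {(v, k)})"
      proof (cases "y = (v,k)")
        case True thus ?thesis using k' y by (metis DiffI fst_conv image_eqI prod.inject singletonD)
      next
        case False thus ?thesis using y by blast
      qed
    qed
  qed blast
  have T': "strip (blowE E) (T - {(v,k)}) = T - {(v,k)}"
    unfolding strip_blow[OF irr] fst' sS using S by force
  have cnt: "{k''. (u,k'')\<in>T - {(v,k)}} = {k''. (u,k'')\<in>T} - (if u = v then {k} else {})" for u
    by auto
  have cv: "card {k''. (v,k'')\<in>T - {(v,k)}} = card {k. (v,k)\<in>T} - 1"
    using cnt[of v] x by (simp add: card_Diff_singleton finC fin)
  show ?thesis unfolding Rel_def T' fst_conv snd_conv
  proof (intro conjI ballI)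
    show "finite (T - {(v,k)})" using fin by simp
    show "S = fst ` (T - {(v, k)})" using fst' by simp
    show "strip E S = S" by (rule sS)
    fix u assume u: "u \<in> S"
    show "(w(v := w v - 1)) u = card {ka. (u, ka) \<in> T - {(v, k)}}"
    proof (cases "u = v")
      case True thus ?thesis using cv W u by simp
    next
      case False thus ?thesis using W u by (simp add: cnt)
    qed
  qed
qed

lemma step_b:
  fixes E :: "'a \<Rightarrow> 'a \<Rightarrow> bool"
  assumes sym: "\<And>x y. E x y \<Longrightarrow> E y x" and irr: "\<And>x. \<not> E x x"
    and R: "Rel E (S,w) T" and x: "(v,k) \<in> T" and c: "card {k. (v,k)\<in>T} = 1"
  shows "Rel E (strip E (S - {v}), w) (strip (blowE E) (T - {(v,k)}))"
proof -
  have fin: "finite T" and S: "S = fst ` T" and sS: "strip E S = S"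
    and W: "\<forall>u\<in>S. w u = card {k. (u,k)\<in>T}" using R unfolding Rel_def by auto
  have one: "{k. (v,k)\<in>T} = {k}"
    using c x by (metis (mono_tags, lifting) card_1_singletonE mem_Collect_eq singletonD)
  have fst': "fst ` (T - {(v,k)}) = S - {v}" unfolding S using one by force
  have vn: "v \<notin> strip E (S - {v})" unfolding strip_def by auto
  have sub: "strip E (S - {v}) \<subseteq> S - {v}" unfolding strip_def by auto
  have T': "strip (blowE E) (T - {(v,k)}) = {y\<in>T. fst y \<in> strip E (S - {v})}"
    unfolding strip_blow[OF irr] fst' using vn by force
  have f2: "fst ` {y\<in>T. fst y \<in> strip E (S - {v})} = strip E (S - {v})"
    using sub S by force
  have cnt: "u \<in> strip E (S - {v}) \<Longrightarrow> {l. (u,l)\<in>{y\<in>T. fst y \<in> strip E (S - {v})}} = {l. (u,l)\<in>T}" for u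
    by auto
  show ?thesis unfolding Rel_def T' using fin f2 strip_idem[of E, OF sym] W sub
    by (auto simp: cnt)
qed

lemma card_pos:
  assumes "Rel E (S,w) T" "v \<in> S"
  shows "1 \<le> card {k. (v,k)\<in>T}"
proof -
  from assms obtain k where "(v,k)\<in>T" unfolding Rel_def by force
  moreover have "finite T" using assms unfolding Rel_def by auto
  ultimately show ?thesis using finC[of T v]
    by (metis (mono_tags) Suc_leI card_gt_0_iff empty_iff mem_Collect_eq One_nat_def)
qed

lemma fwd:
  fixes E :: "'a \<Rightarrow> 'a \<Rightarrow> bool"
  assumes sym: "\<And>x y. E x y \<Longrightarrow> E y x" and irr: "\<And>x. \<not> E x x"
    and R: "Rel E p T" and m: "wgrim_move E p p'"
  shows "\<exists>T'. grim_move (blowE E) T T' \<and> Rel E p' T'"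
proof -
  obtain S w where p: "p = (S,w)" by (cases p)
  from m obtain v where v: "v \<in> S" and
    cs: "(1 < w v \<and> p' = (S, w(v := w v - 1))) \<or> (w v = 1 \<and> p' = (strip E (S - {v}), w))"
    unfolding wgrim_move_def p by auto
  have wv: "w v = card {k. (v,k)\<in>T}" using R v unfolding Rel_def p by auto
  from R v obtain k where x: "(v,k)\<in>T" unfolding Rel_def p by force
  have gm: "grim_move (blowE E) T (strip (blowE E) (T - {(v,k)}))"
    unfolding grim_move_def using x by blast
  from cs show ?thesis
  proof
    assume a: "1 < w v \<and> p' = (S, w(v := w v - 1))"
    show ?thesis using gm step_a[OF irr R[unfolded p] x] a wv by auto
  next
    assume a: "w v = 1 \<and> p' = (strip E (S - {v}), w)"
    show ?thesis using gm step_b[OF sym irr R[unfolded p] x] a wv by auto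
  qed
qed

lemma bwd:
  fixes E :: "'a \<Rightarrow> 'a \<Rightarrow> bool"
  assumes sym: "\<And>x y. E x y \<Longrightarrow> E y x" and irr: "\<And>x. \<not> E x x"
    and R: "Rel E p T" and m: "grim_move (blowE E) T T'"
  shows "\<exists>p'. wgrim_move E p p' \<and> Rel E p' T'"
proof -
  obtain S w where p: "p = (S,w)" by (cases p)
  from m obtain x where x: "x \<in> T" and T': "T' = strip (blowE E) (T - {x})"
    unfolding grim_move_def by auto
  obtain v k where vk: "x = (v,k)" by (cases x)
  have vS: "v \<in> S" using R x vk unfolding Rel_def p by force
  have wv: "w v = card {k. (v,k)\<in>T}" using R vS unfolding Rel_def p by auto
  have ge: "1 \<le> w v" using card_pos[OF R[unfolded p] vS] wv by simp
  show ?thesis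
  proof (cases "w v = 1")
    case True
    then show ?thesis using step_b[OF sym irr R[unfolded p], of v k] x vk wv vS T'
      unfolding wgrim_move_def p by (intro exI[of _ "(strip E (S - {v}), w)"]) auto
  next
    case False
    then have "1 < w v" using ge by simp
    hence "wgrim_move E (S,w) (S, w(v := w v - 1))" unfolding wgrim_move_def using vS by auto
    then show ?thesis using step_a[OF irr R[unfolded p], of v k] x vk wv vS T' \<open>1 < w v\<close>
      unfolding p by auto
  qed
qed

theorem theorem2p3:
  fixes V :: "'a set" and E :: "'a \<Rightarrow> 'a \<Rightarrow> bool" and t :: "'a \<Rightarrow> nat"
  assumes "finite V"
    and "\<And>x y. E x y \<Longrightarrow> E y x"
    and "\<And>x. \<not> E x x"
    and "\<And>x y. E x y \<Longrightarrow> x \<in> V \<and> y \<in> V"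
    and "\<And>v. v \<in> V \<Longrightarrow> 0 < t v"
  shows "N_pos (wgrim_move E) (strip E V, t) \<longleftrightarrow>
         N_pos (grim_move (blowE E)) (strip (blowE E) (blowV V t))"
proof -
  let ?B = "blowV V t"
  have finB: "finite ?B"
  proof (rule finite_subset[of _ "V \<times> {..<Max (t ` V)+1}"])
    show "?B \<subseteq> V \<times> {..<Max (t ` V)+1}"
      unfolding blowV_def using assms(1) by (auto simp: less_Suc_eq_le intro!: order.trans[OF less_imp_le Max_ge])
  qed (use assms(1) in auto)
  have fB: "fst ` ?B = V" unfolding blowV_def using assms(5) by force
  have T0: "strip (blowE E) ?B = {y\<in>?B. fst y \<in> strip E V}"
    using strip_blow[of E, OF assms(3)] fB by simp
  have sV: "strip E V \<subseteq> V" unfolding strip_def by auto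
  have R0: "Rel E (strip E V, t) (strip (blowE E) ?B)"
    unfolding Rel_def T0
  proof (intro conjI ballI)
    show "finite {y\<in>?B. fst y \<in> strip E V}" using finB by simp
    show "fst (strip E V, t) = fst ` {y\<in>?B. fst y \<in> strip E V}"
      using sV assms(5) unfolding blowV_def by force
    show "strip E (fst (strip E V, t)) = fst (strip E V, t)"
      using strip_idem[OF assms(2)] by simp
    fix v assume "v \<in> fst (strip E V, t)"
    hence v: "v \<in> strip E V" "v \<in> V" using sV by auto
    have "{k. (v,k) \<in> {y\<in>?B. fst y \<in> strip E V}} = {..<t v}"
      using v unfolding blowV_def by auto
    thus "snd (strip E V, t) v = card {k. (v,k) \<in> {y\<in>?B. fst y \<in> strip E V}}" by simp
  qed
  have B1: "N_pos (wgrim_move E) a \<Longrightarrow> Rel E a b \<Longrightarrow> N_pos (grim_move (blowE E)) b" for a b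
    apply (rule N_pos_bisim[where R="Rel E"])
      apply (rule fwd[of E, OF assms(2,3)]; assumption)
     apply (rule bwd[of E, OF assms(2,3)]; assumption)
    by assumption+
  have B2: "N_pos (grim_move (blowE E)) b \<Longrightarrow> Rel E a b \<Longrightarrow> N_pos (wgrim_move E) a" for a b
    apply (rule N_pos_bisim[where R="\<lambda>b a. Rel E a b"])
      apply (rule bwd[of E, OF assms(2,3)]; assumption)
     apply (rule fwd[of E, OF assms(2,3)]; assumption)
    by assumption+
  show ?thesis
  proof
    assume "N_pos (wgrim_move E) (strip E V, t)"
    thus "N_pos (grim_move (blowE E)) (strip (blowE E) ?B)"
      using B1 R0 by blast
  next
    assume "N_pos (grim_move (blowE E)) (strip (blowE E) ?B)"
    thus "N_pos (wgrim_move E) (strip E V, t)"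
      using B2 R0 by blast
  qed
qed

end
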